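(* Let $G=(V,E)$ be a finite graph, $q\in\mathbb N$, $\beta\ge0$ and $p=1-e^{-\beta}$. Let $P_{\rm SW}$ be the transition matrix of the Swendsen--Wang dynamics for the $q$-state Potts model on $G$ at inverse temperature $\beta$, and $\tilde P_{\rm SW}$ that of the Swendsen--Wang dynamics for the random-cluster model on $G$ with parameters $p$ and $q$. Then $\lambda(P_{\rm SW})=\lambda(\tilde P_{\rm SW})$.
   Context: For $A\subseteq E$, $c(A)$ is the number of connected components of $(V,A)$; for $\sigma\in\{1,\dots,q\}^V$, $E(\sigma)$ is the set of edges whose endvertices have the same color. Potts measure $\pi(\sigma)=e^{\beta|E(\sigma)|}/Z$; RC measure $\mu(A)\propto(\tfrac{p}{1-p})^{|A|}q^{c(A)}$. $P_{\rm SW}(\sigma,\tau)=(1-p)^{|E(\sigma)|}\sum_{A\subseteq E(\sigma)\cap E(\tau)}(\tfrac{p}{1-p})^{|A|}q^{-c(A)}$ (reversible w.r.t. $\pi$); $\tilde P_{\rm SW}(A,B)=q^{-c(A)}(\tfrac{p}{1-p})^{|B|}\sum_{\sigma}(1-p)^{|E(\sigma)|}\mathbf 1(A\cup B\subseteq E(\sigma))$ (reversible w.r.t. $\mu$). Spectral gap: $\lambda(P)=1-\max\{|\xi|:\xi\text{ eigenvalue of }P,\ \xi\neq1\}$. *)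

theory Defs
  imports "HOL-Analysis.Analysis" "HOL-Library.FuncSet"
begin

definition finite_graph :: "'v set \<Rightarrow> 'v set set \<Rightarrow> bool" where
  "finite_graph V E \<longleftrightarrow> finite V \<and> (\<forall>e\<in>E. e \<subseteq> V \<and> card e = 2)"

definition ncomp :: "'v set \<Rightarrow> 'v set set \<Rightarrow> nat" where
  "ncomp V A = card (V // (({(u, v). {u, v} \<in> A})\<^sup>* \<inter> V \<times> V))"

definition potts_states :: "'v set \<Rightarrow> nat \<Rightarrow> ('v \<Rightarrow> nat) set" where
  "potts_states V q = V \<rightarrow>\<^sub>E {1..q}"

definition mono_edges :: "'v set set \<Rightarrow> ('v \<Rightarrow> nat) \<Rightarrow> 'v set set" where
  "mono_edges E \<sigma> = {e \<in> E. \<forall>u\<in>e. \<forall>v\<in>e. \<sigma> u = \<sigma> v}"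

definition P_SW :: "'v set \<Rightarrow> 'v set set \<Rightarrow> nat \<Rightarrow> real \<Rightarrow> ('v \<Rightarrow> nat) \<Rightarrow> ('v \<Rightarrow> nat) \<Rightarrow> real" where
  "P_SW V E q p \<sigma> \<tau> = (1 - p) ^ card (mono_edges E \<sigma>) *
     (\<Sum>A\<in>Pow (mono_edges E \<sigma> \<inter> mono_edges E \<tau>).
        (p / (1 - p)) ^ card A / real q ^ ncomp V A)"

definition P_SW_RC :: "'v set \<Rightarrow> 'v set set \<Rightarrow> nat \<Rightarrow> real \<Rightarrow> 'v set set \<Rightarrow> 'v set set \<Rightarrow> real" where
  "P_SW_RC V E q p A B = (1 / real q ^ ncomp V A) * (p / (1 - p)) ^ card B *
     (\<Sum>\<sigma>\<in>potts_states V q.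
        (1 - p) ^ card (mono_edges E \<sigma>) * (if A \<union> B \<subseteq> mono_edges E \<sigma> then 1 else 0))"

definition is_eigenvalue :: "'s set \<Rightarrow> ('s \<Rightarrow> 's \<Rightarrow> real) \<Rightarrow> complex \<Rightarrow> bool" where
  "is_eigenvalue S P \<xi> \<longleftrightarrow> (\<exists>f :: 's \<Rightarrow> complex. (\<exists>x\<in>S. f x \<noteq> 0) \<and>
      (\<forall>x\<in>S. (\<Sum>y\<in>S. complex_of_real (P x y) * f y) = \<xi> * f x))"

text \<open>Spectral gap 1 - max{|xi| : xi eigenvalue, xi ~= 1}; the max over the empty set is taken to be 0.\<close>
definition spectral_gap :: "'s set \<Rightarrow> ('s \<Rightarrow> 's \<Rightarrow> real) \<Rightarrow> real" where
  "spectral_gap S P = 1 - Max ({0} \<union> {cmod \<xi> | \<xi>. is_eigenvalue S P \<xi> \<and> \<xi> \<noteq> 1})"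

end

theory Submission
  imports Defs
begin

lemma eig_transfer:
  fixes S :: "'s set" and T :: "'t set"
  assumes fS: "finite S" and fT: "finite T"
    and PMN: "\<And>x y. x \<in> S \<Longrightarrow> y \<in> S \<Longrightarrow> P x y = (\<Sum>z\<in>T. M x z * N z y)"
    and QNM: "\<And>z w. z \<in> T \<Longrightarrow> w \<in> T \<Longrightarrow> Q z w = (\<Sum>x\<in>S. N z x * M x w)"
    and ev: "is_eigenvalue S P \<xi>" and nz: "\<xi> \<noteq> 0"
  shows "is_eigenvalue T Q \<xi>"
proof -
  obtain f where f0: "\<exists>x\<in>S. f x \<noteq> 0"
    and fe: "\<And>x. x \<in> S \<Longrightarrow> (\<Sum>y\<in>S. complex_of_real (P x y) * f y) = \<xi> * f x"
    using ev unfolding is_eigenvalue_def by blast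
  define g where "g z = (\<Sum>y\<in>S. complex_of_real (N z y) * f y)" for z
  have Mg: "(\<Sum>z\<in>T. complex_of_real (M x z) * g z) = \<xi> * f x" if x: "x \<in> S" for x
  proof -
    have "(\<Sum>z\<in>T. complex_of_real (M x z) * g z)
        = (\<Sum>z\<in>T. \<Sum>y\<in>S. complex_of_real (M x z * N z y) * f y)"
      by (simp add: g_def sum_distrib_left mult.assoc)
    also have "\<dots> = (\<Sum>y\<in>S. \<Sum>z\<in>T. complex_of_real (M x z * N z y) * f y)"
      by (rule sum.swap)
    also have "\<dots> = (\<Sum>y\<in>S. complex_of_real (P x y) * f y)"
      by (intro sum.cong refl) (simp add: PMN[OF x] sum_distrib_right)
    also have "\<dots> = \<xi> * f x" by (rule fe[OF x])
    finally show ?thesis .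
  qed
  have g0: "\<exists>z\<in>T. g z \<noteq> 0"
  proof (rule ccontr)
    assume "\<not> ?thesis"
    then have "\<And>z. z \<in> T \<Longrightarrow> g z = 0" by blast
    then have "\<And>x. x \<in> S \<Longrightarrow> \<xi> * f x = 0" using Mg by (metis (no_types, lifting) mult_zero_right sum.neutral)
    then show False using f0 nz by auto
  qed
  have "(\<Sum>w\<in>T. complex_of_real (Q z w) * g w) = \<xi> * g z" if z: "z \<in> T" for z
  proof -
    have "(\<Sum>w\<in>T. complex_of_real (Q z w) * g w)
        = (\<Sum>w\<in>T. \<Sum>x\<in>S. complex_of_real (N z x) * (complex_of_real (M x w) * g w))"
      by (intro sum.cong refl) (simp add: QNM[OF z] sum_distrib_right mult.assoc)
    also have "\<dots> = (\<Sum>x\<in>S. complex_of_real (N z x) * (\<Sum>w\<in>T. complex_of_real (M x w) * g w))"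
      by (subst sum.swap) (simp add: sum_distrib_left)
    also have "\<dots> = (\<Sum>x\<in>S. complex_of_real (N z x) * (\<xi> * f x))"
      by (intro sum.cong refl) (simp add: Mg)
    also have "\<dots> = \<xi> * g z"
      by (simp add: g_def sum_distrib_left mult.left_commute)
    finally show ?thesis .
  qed
  then show ?thesis unfolding is_eigenvalue_def using g0 by blast
qed

lemma gap_eq:
  fixes S :: "'s set" and T :: "'t set"
  assumes fS: "finite S" and fT: "finite T"
    and PMN: "\<And>x y. x \<in> S \<Longrightarrow> y \<in> S \<Longrightarrow> P x y = (\<Sum>z\<in>T. M x z * N z y)"
    and QNM: "\<And>z w. z \<in> T \<Longrightarrow> w \<in> T \<Longrightarrow> Q z w = (\<Sum>x\<in>S. N z x * M x w)"
  shows "spectral_gap S P = spectral_gap T Q"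
proof -
  have "{0} \<union> {cmod \<xi> | \<xi>. is_eigenvalue S P \<xi> \<and> \<xi> \<noteq> 1}
      = {0} \<union> {cmod \<xi> | \<xi>. is_eigenvalue T Q \<xi> \<and> \<xi> \<noteq> 1}"
  proof -
    have *: "(0::real) \<in> A \<Longrightarrow> (\<And>\<xi>. \<xi> \<noteq> 0 \<Longrightarrow> R1 \<xi> \<longleftrightarrow> R2 \<xi>) \<Longrightarrow>
        A \<union> {cmod \<xi> | \<xi>. R1 \<xi>} = A \<union> {cmod \<xi> | \<xi>. R2 \<xi>}" for A R1 R2
      by auto (metis norm_zero)+
    show ?thesis
      by (rule *) (auto intro: eig_transfer[OF fS fT PMN QNM] eig_transfer[OF fT fS QNM PMN])
  qed
  then show ?thesis unfolding spectral_gap_def by simp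
qed

theorem lemma2p6:
  fixes V :: "'v set" and E :: "'v set set" and q :: nat and \<beta> p :: real
  assumes "finite_graph V E"
    and "q \<ge> 1"
    and "\<beta> \<ge> 0"
    and "p = 1 - exp (- \<beta>)"
  shows "spectral_gap (potts_states V q) (P_SW V E q p)
       = spectral_gap (Pow E) (P_SW_RC V E q p)"
proof -
  have fV: "finite V" and EV: "\<And>e. e \<in> E \<Longrightarrow> e \<subseteq> V"
    using assms(1) unfolding finite_graph_def by auto
  have fE: "finite E" using EV fV by (meson Pow_iff finite_Pow_iff rev_finite_subset subsetI)
  have fS: "finite (potts_states V q)" unfolding potts_states_def using fV by (simp add: finite_PiE)
  define M where "M \<sigma> A = (1 - p) ^ card (mono_edges E \<sigma>) * (p / (1 - p)) ^ card A *
      (if A \<subseteq> mono_edges E \<sigma> then 1 else 0)" for \<sigma> :: "'v \<Rightarrow> nat" and A :: "'v set set"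
  define N where "N A \<tau> = (1 / real q ^ ncomp V A) * (if A \<subseteq> mono_edges E \<tau> then 1 else 0)"
    for \<tau> :: "'v \<Rightarrow> nat" and A :: "'v set set"
  have fPE: "finite (Pow E)" using fE by simp
  have mE: "mono_edges E \<sigma> \<subseteq> E" for \<sigma> unfolding mono_edges_def by auto
  show ?thesis
  proof (rule gap_eq[OF fS _ _ _, where M = M and N = N])
    show "finite (Pow E)" using fE by simp
  next
    fix \<sigma> \<tau> assume "\<sigma> \<in> potts_states V q" "\<tau> \<in> potts_states V q"
    have "Pow (mono_edges E \<sigma> \<inter> mono_edges E \<tau>) = {A \<in> Pow E. A \<subseteq> mono_edges E \<sigma> \<and> A \<subseteq> mono_edges E \<tau>}"
      using mE by auto
    then have "P_SW V E q p \<sigma> \<tau> = (1 - p) ^ card (mono_edges E \<sigma>) *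
       (\<Sum>A\<in>{A \<in> Pow E. A \<subseteq> mono_edges E \<sigma> \<and> A \<subseteq> mono_edges E \<tau>}.
        (p / (1 - p)) ^ card A / real q ^ ncomp V A)" unfolding P_SW_def by simp
    also have "\<dots> = (1 - p) ^ card (mono_edges E \<sigma>) *
       (\<Sum>A\<in>Pow E. if A \<subseteq> mono_edges E \<sigma> \<and> A \<subseteq> mono_edges E \<tau> then
        (p / (1 - p)) ^ card A / real q ^ ncomp V A else 0)"
      using sum.inter_filter[OF fPE, of "\<lambda>A. (p / (1 - p)) ^ card A / real q ^ ncomp V A" "\<lambda>A. A \<subseteq> mono_edges E \<sigma> \<and> A \<subseteq> mono_edges E \<tau>"]
      by simp
    also have "\<dots> = (\<Sum>A\<in>Pow E. M \<sigma> A * N A \<tau>)"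
      unfolding sum_distrib_left by (intro sum.cong refl) (simp add: M_def N_def)
    finally show "P_SW V E q p \<sigma> \<tau> = (\<Sum>A\<in>Pow E. M \<sigma> A * N A \<tau>)" .
  next
    fix A B assume "A \<in> Pow E" "B \<in> Pow E"
    show "P_SW_RC V E q p A B = (\<Sum>\<sigma>\<in>potts_states V q. N A \<sigma> * M \<sigma> B)"
      unfolding P_SW_RC_def M_def N_def sum_distrib_left
      by (intro sum.cong refl) auto
  qed
qed

end
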